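(* Let $N\ge 1$ and $-\infty<a_i\le b_i<\infty$ with $r_i=(b_i-a_i)/2>0$ for all $i$; set $m_i=(a_i+b_i)/2$, $\Theta=\prod_{i=1}^N[a_i,b_i]$, $T(y)=\sum_{i=1}^N y_i$. Let $0<n<N$ and \[ V_n=\min_{0<\pi_i\le 1,\ \sum_{i=1}^N\pi_i\le n}\ \sum_{i=1}^N r_i^2\,\frac{1-\pi_i}{\pi_i}. \] Then, taking the infimum over all pairs $(p,\delta)$ where $p$ is a sampling design with $\pi_i=\mathbb P_p(i\in S)>0$ for all $i$ and $\mathbb E_p[|S|]\le n$, and $\delta$ is an unbiased estimator for $p$, \[ \inf_{p,\delta}\sup_{y\in\Theta}R(\delta,p;y)=V_n . \] Moreover, $V_n$ is attained by sampling each unit independently with inclusion probabilities $\pi_i^*=\min(1,c\,r_i)$, where $c>0$ is chosen so that $\sum_{i=1}^N\pi_i^*=n$, and using the estimator $\widehat T(y_S)=\sum_{i=1}^N m_i+\sum_{i\in S}\frac{y_i-m_i}{\pi_i^*}$.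
   Context: A sampling design is a probability distribution $p$ on the subsets $s\subseteq\{1,\dots,N\}$; $S$ denotes the random sample drawn from $p$, $\mathbb P_p$ and $\mathbb E_p$ denote probability and expectation with respect to $p$. An estimator $\delta$ is a collection of measurable functions $\delta_s:\Theta_s\to\mathbb R$, one for each subset $s$, where $\Theta_s=\prod_{i\in s}[a_i,b_i]$; for $y\in\Theta$ write $y_s=(y_i)_{i\in s}$. The estimator is unbiased if $\mathbb E_p[\delta_S(y_S)]=T(y)$ for all $y\in\Theta$. The risk is $R(\delta,p;y)=\mathbb E_p[(\delta_S(y_S)-T(y))^2]$. *)

theory Defs
  imports "HOL-Analysis.Analysis"
begin

text \<open>Units are indexed by 0..N-1 (i.e. the set {..<N}). Samples are subsets of {..<N}.
  Values y are elements of the extensional product Theta = PiE {..<N} (\<lambda>i. {a i..b i}).\<close>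

definition Theta :: "nat \<Rightarrow> (nat \<Rightarrow> real) \<Rightarrow> (nat \<Rightarrow> real) \<Rightarrow> (nat \<Rightarrow> real) set" where
  "Theta N a b = PiE {..<N} (\<lambda>i. {a i..b i})"

definition total :: "nat \<Rightarrow> (nat \<Rightarrow> real) \<Rightarrow> real" where
  "total N y = (\<Sum>i<N. y i)"

definition is_design :: "nat \<Rightarrow> (nat set \<Rightarrow> real) \<Rightarrow> bool" where
  "is_design N p \<longleftrightarrow> (\<forall>s. 0 \<le> p s) \<and> (\<forall>s. \<not> s \<subseteq> {..<N} \<longrightarrow> p s = 0)
      \<and> (\<Sum>s\<in>Pow {..<N}. p s) = 1"

definition incl_prob :: "nat \<Rightarrow> (nat set \<Rightarrow> real) \<Rightarrow> nat \<Rightarrow> real" where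
  "incl_prob N p i = (\<Sum>s\<in>{s\<in>Pow {..<N}. i \<in> s}. p s)"

definition exp_size :: "nat \<Rightarrow> (nat set \<Rightarrow> real) \<Rightarrow> real" where
  "exp_size N p = (\<Sum>s\<in>Pow {..<N}. p s * real (card s))"

text \<open>An estimator: for each subset s a measurable function delta s on
  Theta_s = prod_{i in s} [a_i,b_i] (extensional functions on s). It is applied to y_S = restrict y S.\<close>
definition is_estimator :: "nat \<Rightarrow> (nat \<Rightarrow> real) \<Rightarrow> (nat \<Rightarrow> real)
    \<Rightarrow> (nat set \<Rightarrow> (nat \<Rightarrow> real) \<Rightarrow> real) \<Rightarrow> bool" where
  "is_estimator N a b \<delta> \<longleftrightarrow>
     (\<forall>s. s \<subseteq> {..<N} \<longrightarrow>
        \<delta> s \<in> borel_measurable (PiM s (\<lambda>i. restrict_space borel {a i..b i})))"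

definition unbiased :: "nat \<Rightarrow> (nat \<Rightarrow> real) \<Rightarrow> (nat \<Rightarrow> real)
    \<Rightarrow> (nat set \<Rightarrow> real) \<Rightarrow> (nat set \<Rightarrow> (nat \<Rightarrow> real) \<Rightarrow> real) \<Rightarrow> bool" where
  "unbiased N a b p \<delta> \<longleftrightarrow>
     (\<forall>y\<in>Theta N a b. (\<Sum>s\<in>Pow {..<N}. p s * \<delta> s (restrict y s)) = total N y)"

definition risk :: "nat \<Rightarrow> (nat set \<Rightarrow> real) \<Rightarrow> (nat set \<Rightarrow> (nat \<Rightarrow> real) \<Rightarrow> real)
    \<Rightarrow> (nat \<Rightarrow> real) \<Rightarrow> real" where
  "risk N p \<delta> y = (\<Sum>s\<in>Pow {..<N}. p s * (\<delta> s (restrict y s) - total N y)^2)"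

definition admissible :: "nat \<Rightarrow> (nat \<Rightarrow> real) \<Rightarrow> (nat \<Rightarrow> real) \<Rightarrow> real
    \<Rightarrow> (nat set \<Rightarrow> real) \<Rightarrow> (nat set \<Rightarrow> (nat \<Rightarrow> real) \<Rightarrow> real) \<Rightarrow> bool" where
  "admissible N a b n p \<delta> \<longleftrightarrow> is_design N p \<and> (\<forall>i<N. 0 < incl_prob N p i)
     \<and> exp_size N p \<le> n \<and> is_estimator N a b \<delta> \<and> unbiased N a b p \<delta>"

text \<open>Maximal risk over Theta, in the extended reals (it may be infinite).\<close>
definition max_risk :: "nat \<Rightarrow> (nat \<Rightarrow> real) \<Rightarrow> (nat \<Rightarrow> real)
    \<Rightarrow> (nat set \<Rightarrow> real) \<Rightarrow> (nat set \<Rightarrow> (nat \<Rightarrow> real) \<Rightarrow> real) \<Rightarrow> ereal" where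
  "max_risk N a b p \<delta> = (SUP y\<in>Theta N a b. ereal (risk N p \<delta> y))"

definition Vn :: "nat \<Rightarrow> (nat \<Rightarrow> real) \<Rightarrow> real \<Rightarrow> real" where
  "Vn N r n = Inf {(\<Sum>i<N. (r i)^2 * (1 - \<pi> i) / \<pi> i) | \<pi>.
                   (\<forall>i<N. 0 < \<pi> i \<and> \<pi> i \<le> 1) \<and> (\<Sum>i<N. \<pi> i) \<le> n}"

definition poisson_design :: "nat \<Rightarrow> (nat \<Rightarrow> real) \<Rightarrow> nat set \<Rightarrow> real" where
  "poisson_design N \<pi> s = (if s \<subseteq> {..<N}
      then (\<Prod>i\<in>s. \<pi> i) * (\<Prod>i\<in>{..<N} - s. 1 - \<pi> i) else 0)"

end

theory Submission
  imports Defs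
begin

lemma poisson_sub:
  fixes \<pi> :: "nat \<Rightarrow> real"
  assumes "finite A" "B \<subseteq> A"
  shows "(\<Sum>s\<in>{s\<in>Pow A. B \<subseteq> s}. (\<Prod>i\<in>s. \<pi> i) * (\<Prod>i\<in>A - s. 1 - \<pi> i)) = (\<Prod>i\<in>B. \<pi> i)"
proof -
  define g where "g = (\<lambda>i. if i \<in> B then 0 else 1 - \<pi> i)"
  have "(\<Prod>i\<in>A. \<pi> i + g i) = (\<Sum>X\<in>Pow A. (\<Prod>x\<in>X. \<pi> x) * (\<Prod>x\<in>A-X. g x))"
    by (rule prod_add[OF assms(1)])
  also have "\<dots> = (\<Sum>X\<in>Pow A. if B \<subseteq> X then (\<Prod>x\<in>X. \<pi> x) * (\<Prod>x\<in>A-X. 1 - \<pi> x) else 0)"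
  proof (rule sum.cong[OF refl])
    fix X assume X: "X \<in> Pow A"
    show "(\<Prod>x\<in>X. \<pi> x) * (\<Prod>x\<in>A-X. g x) = (if B \<subseteq> X then (\<Prod>x\<in>X. \<pi> x) * (\<Prod>x\<in>A-X. 1 - \<pi> x) else 0)"
    proof (cases "B \<subseteq> X")
      case True
      then have "(\<Prod>x\<in>A-X. g x) = (\<Prod>x\<in>A-X. 1 - \<pi> x)"
        by (intro prod.cong) (auto simp: g_def)
      then show ?thesis using True by simp
    next
      case False
      then obtain j where "j \<in> B" "j \<notin> X" by auto
      then have "(\<Prod>x\<in>A-X. g x) = 0" using assms
        by (intro prod_zero) (auto simp: g_def)
      then show ?thesis using False by simp
    qed
  qed
  also have "\<dots> = (\<Sum>s\<in>{s\<in>Pow A. B \<subseteq> s}. (\<Prod>i\<in>s. \<pi> i) * (\<Prod>i\<in>A - s. 1 - \<pi> i))"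
    using assms(1) by (subst sum.inter_filter) auto
  finally have 1: "(\<Prod>i\<in>A. \<pi> i + g i) = \<dots>" .
  have "(\<Prod>i\<in>A. \<pi> i + g i) = (\<Prod>i\<in>A. if i \<in> B then \<pi> i else 1)"
    by (intro prod.cong) (auto simp: g_def)
  also have "\<dots> = (\<Prod>i\<in>B. \<pi> i)"
    using assms by (simp add: prod.If_cases Int_absorb1)
  finally show ?thesis using 1 by simp
qed

lemma swap_incl:
  fixes p :: "nat set \<Rightarrow> real"
  assumes "finite A"
  shows "(\<Sum>s\<in>Pow A. p s * (\<Sum>i\<in>s. w i)) = (\<Sum>i\<in>A. w i * (\<Sum>s\<in>{s\<in>Pow A. i \<in> s}. p s))"
proof -
  have "(\<Sum>s\<in>Pow A. p s * (\<Sum>i\<in>s. w i)) = (\<Sum>s\<in>Pow A. \<Sum>i\<in>A. if i \<in> s then p s * w i else 0)"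
  proof (rule sum.cong[OF refl])
    fix s assume "s \<in> Pow A"
    then have "(\<Sum>i\<in>s. w i) = (\<Sum>i\<in>A. if i \<in> s then w i else 0)"
      using assms by (simp add: sum.If_cases Int_absorb1)
    then show "p s * (\<Sum>i\<in>s. w i) = (\<Sum>i\<in>A. if i \<in> s then p s * w i else 0)"
      by (simp add: sum_distrib_left if_distrib cong: if_cong)
  qed
  also have "\<dots> = (\<Sum>i\<in>A. \<Sum>s\<in>Pow A. if i \<in> s then p s * w i else 0)"
    by (rule sum.swap)
  also have "\<dots> = (\<Sum>i\<in>A. w i * (\<Sum>s\<in>{s\<in>Pow A. i \<in> s}. p s))"
  proof (rule sum.cong[OF refl])
    fix i assume "i \<in> A"
    have "(\<Sum>s\<in>{s\<in>Pow A. i \<in> s}. p s * w i) = (\<Sum>s\<in>Pow A. if i \<in> s then p s * w i else 0)"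
      using assms by (subst sum.inter_filter) auto
    then show "(\<Sum>s\<in>Pow A. if i \<in> s then p s * w i else 0) = w i * (\<Sum>s\<in>{s\<in>Pow A. i \<in> s}. p s)"
      by (simp add: sum_distrib_left sum_distrib_right mult.commute)
  qed
  finally show ?thesis .
qed

lemma exp_size_eq: "exp_size N p = (\<Sum>i<N. incl_prob N p i)"
  using swap_incl[of "{..<N}" p "\<lambda>_. 1"] unfolding exp_size_def incl_prob_def by simp

definition Ind :: "nat \<Rightarrow> nat set \<Rightarrow> real" where "Ind i s = (if i \<in> s then 1 else 0)"

lemma lin4:
  fixes P :: "'a set" and q f g h :: "'a \<Rightarrow> real"
  shows "(\<Sum>s\<in>P. q s * (\<alpha> * f s + \<beta> * g s + \<gamma> * h s + \<delta>)) =
    \<alpha> * (\<Sum>s\<in>P. q s * f s) + \<beta> * (\<Sum>s\<in>P. q s * g s) + \<gamma> * (\<Sum>s\<in>P. q s * h s) + \<delta> * (\<Sum>s\<in>P. q s)"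
  by (simp add: sum.distrib sum_distrib_left distrib_left algebra_simps)

locale pois =
  fixes N :: nat and \<pi> :: "nat \<Rightarrow> real"
  assumes pos: "\<And>i. i < N \<Longrightarrow> 0 < \<pi> i" and le1: "\<And>i. i < N \<Longrightarrow> \<pi> i \<le> 1"
begin

abbreviation "pd \<equiv> poisson_design N \<pi>"

lemma pE: assumes "B \<subseteq> {..<N}"
  shows "(\<Sum>s\<in>Pow {..<N}. pd s * (if B \<subseteq> s then 1 else 0)) = (\<Prod>i\<in>B. \<pi> i)"
proof -
  have "(\<Sum>s\<in>Pow {..<N}. pd s * (if B \<subseteq> s then 1 else 0)) =
     (\<Sum>s\<in>Pow {..<N}. if B \<subseteq> s then (\<Prod>i\<in>s. \<pi> i) * (\<Prod>i\<in>{..<N} - s. 1 - \<pi> i) else 0)"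
    by (intro sum.cong) (auto simp: poisson_design_def)
  also have "\<dots> = (\<Sum>s\<in>{s\<in>Pow {..<N}. B \<subseteq> s}. (\<Prod>i\<in>s. \<pi> i) * (\<Prod>i\<in>{..<N} - s. 1 - \<pi> i))"
    by (subst sum.inter_filter) auto
  also have "\<dots> = (\<Prod>i\<in>B. \<pi> i)" by (rule poisson_sub[OF _ assms]) simp
  finally show ?thesis .
qed

lemma p_sum1: "(\<Sum>s\<in>Pow {..<N}. pd s) = 1"
  using pE[of "{}"] by simp

lemma p_nonneg: "0 \<le> pd s"
proof -
  have "s \<subseteq> {..<N} \<Longrightarrow> 0 \<le> (\<Prod>i\<in>s. \<pi> i) * (\<Prod>i\<in>{..<N} - s. 1 - \<pi> i)"
    by (intro mult_nonneg_nonneg prod_nonneg) (auto intro: less_imp_le pos simp: le1)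
  then show ?thesis by (auto simp: poisson_design_def)
qed

lemma is_design: "is_design N pd"
  unfolding is_design_def using p_nonneg p_sum1 by (auto simp: poisson_design_def)

lemma incl: assumes "i < N" shows "incl_prob N pd i = \<pi> i"
proof -
  have "incl_prob N pd i = (\<Sum>s\<in>Pow {..<N}. pd s * (if {i} \<subseteq> s then 1 else 0))"
    unfolding incl_prob_def by (subst sum.inter_filter) (auto intro!: sum.cong)
  also have "\<dots> = \<pi> i" using assms by (subst pE) auto
  finally show ?thesis .
qed

lemma EInd: assumes "i < N" shows "(\<Sum>s\<in>Pow {..<N}. pd s * Ind i s) = \<pi> i"
  using pE[of "{i}"] assms by (simp add: Ind_def)

lemma EInd2: assumes "i < N" "j < N"
  shows "(\<Sum>s\<in>Pow {..<N}. pd s * (Ind i s * Ind j s)) = (if i = j then \<pi> i else \<pi> i * \<pi> j)"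
proof -
  have "(\<Sum>s\<in>Pow {..<N}. pd s * (Ind i s * Ind j s)) = (\<Sum>s\<in>Pow {..<N}. pd s * (if {i,j} \<subseteq> s then 1 else 0))"
    by (intro sum.cong) (auto simp: Ind_def)
  also have "\<dots> = (\<Prod>k\<in>{i,j}. \<pi> k)" using assms by (subst pE) auto
  finally show ?thesis by auto
qed

lemma EX2: assumes "i < N" "j < N"
  shows "(\<Sum>s\<in>Pow {..<N}. pd s * ((Ind i s / \<pi> i - 1) * (Ind j s / \<pi> j - 1)))
     = (if i = j then (1 - \<pi> i) / \<pi> i else 0)"
proof -
  have pi: "\<pi> i > 0" "\<pi> j > 0" using assms pos by auto
  have "\<And>s. (Ind i s / \<pi> i - 1) * (Ind j s / \<pi> j - 1) =
     (1 / (\<pi> i * \<pi> j)) * (Ind i s * Ind j s) + (- 1 / \<pi> i) * Ind i s + (- 1 / \<pi> j) * Ind j s + 1"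
    using pi by (simp add: field_simps)
  then have "(\<Sum>s\<in>Pow {..<N}. pd s * ((Ind i s / \<pi> i - 1) * (Ind j s / \<pi> j - 1))) =
    (1 / (\<pi> i * \<pi> j)) * (\<Sum>s\<in>Pow {..<N}. pd s * (Ind i s * Ind j s)) + (- 1 / \<pi> i) * (\<Sum>s\<in>Pow {..<N}. pd s * Ind i s)
     + (- 1 / \<pi> j) * (\<Sum>s\<in>Pow {..<N}. pd s * Ind j s) + 1 * (\<Sum>s\<in>Pow {..<N}. pd s)"
    by (simp only: lin4)
  also have "\<dots> = (if i = j then (1 - \<pi> i) / \<pi> i else 0)"
    using pi assms by (simp only: EInd EInd2 p_sum1) (auto simp: field_simps)
  finally show ?thesis .
qed

end

context pois begin

lemma diff_eq:
  assumes "s \<subseteq> {..<N}"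
  shows "(\<Sum>i<N. m i) + (\<Sum>i\<in>s. (restrict y s i - m i) / \<pi> i) - total N y
     = (\<Sum>i<N. (y i - m i) * (Ind i s / \<pi> i - 1))"
proof -
  have "(\<Sum>i\<in>s. (restrict y s i - m i) / \<pi> i) = (\<Sum>i<N. if i \<in> s then (y i - m i) / \<pi> i else 0)"
    using assms by (simp add: sum.If_cases Int_absorb1)
  also have "\<dots> = (\<Sum>i<N. (y i - m i) * (Ind i s / \<pi> i))"
    by (intro sum.cong) (auto simp: Ind_def)
  finally have 1: "(\<Sum>i\<in>s. (restrict y s i - m i) / \<pi> i) = \<dots>" .
  show ?thesis unfolding 1 total_def
    by (simp add: algebra_simps sum.distrib sum_subtractf)
qed

lemma risk_pois:
  "risk N pd (\<lambda>s z. (\<Sum>i<N. m i) + (\<Sum>i\<in>s. (z i - m i) / \<pi> i)) y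
     = (\<Sum>i<N. (y i - m i)^2 * (1 - \<pi> i) / \<pi> i)"
proof -
  define X where "X = (\<lambda>i s. Ind i s / \<pi> i - 1)"
  define d where "d = (\<lambda>i. y i - m i)"
  have "risk N pd (\<lambda>s z. (\<Sum>i<N. m i) + (\<Sum>i\<in>s. (z i - m i) / \<pi> i)) y
      = (\<Sum>s\<in>Pow {..<N}. pd s * (\<Sum>i<N. \<Sum>j<N. (d i * d j) * (X i s * X j s)))"
    unfolding risk_def
  proof (rule sum.cong[OF refl])
    fix s assume "s \<in> Pow {..<N}"
    then have "(\<Sum>i<N. m i) + (\<Sum>i\<in>s. (restrict y s i - m i) / \<pi> i) - total N y = (\<Sum>i<N. d i * X i s)"
      using diff_eq[of s] by (simp add: X_def d_def)
    then show "pd s * ((\<Sum>i<N. m i) + (\<Sum>i\<in>s. (restrict y s i - m i) / \<pi> i) - total N y)\<^sup>2 =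
         pd s * (\<Sum>i<N. \<Sum>j<N. d i * d j * (X i s * X j s))"
      by (simp add: power2_eq_square sum_product algebra_simps)
  qed
  also have "\<dots> = (\<Sum>i<N. \<Sum>j<N. (d i * d j) * (\<Sum>s\<in>Pow {..<N}. pd s * (X i s * X j s)))"
    by (simp add: sum_distrib_left sum_distrib_right algebra_simps sum.swap[of _ "Pow {..<N}"])
  also have "\<dots> = (\<Sum>i<N. \<Sum>j<N. (d i * d j) * (if i = j then (1 - \<pi> i) / \<pi> i else 0))"
    by (intro sum.cong refl) (simp add: X_def EX2)
  also have "\<dots> = (\<Sum>i<N. (y i - m i)^2 * (1 - \<pi> i) / \<pi> i)"
    by (simp add: d_def power2_eq_square if_distrib sum.delta cong: if_cong)
  finally show ?thesis .
qed

lemma unbiased_pois: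
  "unbiased N a b pd (\<lambda>s z. (\<Sum>i<N. m i) + (\<Sum>i\<in>s. (z i - m i) / \<pi> i))"
  unfolding unbiased_def
proof
  fix y
  have "(\<Sum>s\<in>Pow {..<N}. pd s * ((\<Sum>i<N. m i) + (\<Sum>i\<in>s. (restrict y s i - m i) / \<pi> i)))
     = (\<Sum>s\<in>Pow {..<N}. pd s * (\<Sum>i<N. m i)) + (\<Sum>s\<in>Pow {..<N}. pd s * (\<Sum>i\<in>s. (y i - m i) / \<pi> i))"
    by (simp add: distrib_left sum.distrib)
  also have "(\<Sum>s\<in>Pow {..<N}. pd s * (\<Sum>i\<in>s. (y i - m i) / \<pi> i)) = (\<Sum>i<N. (y i - m i) / \<pi> i * incl_prob N pd i)"
    unfolding incl_prob_def by (rule swap_incl) simp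
  also have "\<dots> = (\<Sum>i<N. y i - m i)"
    using pos by (intro sum.cong) (auto simp: incl less_imp_neq[symmetric])
  finally show "(\<Sum>s\<in>Pow {..<N}. pd s * ((\<Sum>i<N. m i) + (\<Sum>i\<in>s. (restrict y s i - m i) / \<pi> i))) = total N y"
    by (simp add: sum_distrib_right[symmetric] p_sum1 total_def sum_subtractf)
qed

lemma estimator_pois:
  "is_estimator N a b (\<lambda>s z. (\<Sum>i<N. m i) + (\<Sum>i\<in>s. (z i - m i) / \<pi> i))"
  unfolding is_estimator_def
proof (intro allI impI)
  fix s :: "nat set" assume "s \<subseteq> {..<N}"
  have "(\<lambda>z. z i) \<in> borel_measurable (PiM s (\<lambda>i. restrict_space borel {a i..b i}))" if "i \<in> s" for i
  proof -
    have "(\<lambda>z. z i) \<in> measurable (PiM s (\<lambda>i. restrict_space borel {a i..b i})) (restrict_space borel {a i..b i})"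
      using that by (rule measurable_component_singleton)
    moreover have "(\<lambda>x. x) \<in> measurable (restrict_space borel {a i..b i}) (borel :: real measure)"
      by (rule measurable_restrict_space1) simp
    ultimately show ?thesis by (rule measurable_compose)
  qed
  then show "(\<lambda>z. (\<Sum>i<N. m i) + (\<Sum>i\<in>s. (z i - m i) / \<pi> i)) \<in> borel_measurable (PiM s (\<lambda>i. restrict_space borel {a i..b i}))"
    by measurable
qed

lemma exp_size_pois: "exp_size N pd = (\<Sum>i<N. \<pi> i)"
  by (simp add: exp_size_eq incl)

end

abbreviation Ev :: "nat \<Rightarrow> (nat \<Rightarrow> real) set" where "Ev N \<equiv> PiE {..<N} (\<lambda>_. {-1, 1::real})"

lemma Ev_finite: "finite (Ev N)"
  by (intro finite_PiE finite_lessThan) simp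

lemma Ev_card: "card (Ev N) > 0"
  using Ev_finite[of N] by (simp add: card_gt_0_iff PiE_eq_empty_iff)

lemma flip_zero:
  fixes i N :: nat and G :: "(nat \<Rightarrow> real) \<Rightarrow> real"
  assumes "i < N" and inv: "\<And>e. e \<in> Ev N \<Longrightarrow> G (e(i := - e i)) = G e"
  shows "(\<Sum>e\<in>Ev N. G e * e i) = 0"
proof -
  define \<phi> where "\<phi> = (\<lambda>e::nat\<Rightarrow>real. e(i := - e i))"
  have mem: "\<phi> e \<in> Ev N" if "e \<in> Ev N" for e
    using that assms(1) by (auto simp: \<phi>_def PiE_iff extensional_def)
  have inv2: "\<phi> (\<phi> e) = e" for e by (simp add: \<phi>_def)
  have "(\<Sum>e\<in>Ev N. G e * e i) = (\<Sum>e\<in>Ev N. G (\<phi> e) * \<phi> e i)"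
    apply (rule sum.reindex_bij_witness[of _ \<phi> \<phi>])
    using mem inv2 by auto
  also have "\<dots> = - (\<Sum>e\<in>Ev N. G e * e i)"
  proof -
    have "\<And>e. e \<in> Ev N \<Longrightarrow> G (\<phi> e) * \<phi> e i = - (G e * e i)"
      using inv by (simp add: \<phi>_def)
    then have "(\<Sum>e\<in>Ev N. G (\<phi> e) * \<phi> e i) = (\<Sum>e\<in>Ev N. - (G e * e i))"
      by (rule sum.cong[OF refl])
    then show ?thesis by (simp add: sum_negf)
  qed
  finally show ?thesis by simp
qed

lemma orth:
  assumes "i < N" "j < N"
  shows "(\<Sum>e\<in>Ev N. e i * e j) = (if i = j then real (card (Ev N)) else 0)"
proof (cases "i = j")
  case True
  have "(\<Sum>e\<in>Ev N. e i * e j) = (\<Sum>e\<in>Ev N. 1)"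
  proof (intro sum.cong refl)
    fix e assume "e \<in> Ev N"
    then have "e j = -1 \<or> e j = 1" using assms by (auto simp: PiE_iff)
    then show "e i * e j = 1" using True by auto
  qed
  then show ?thesis using True by simp
next
  case False
  have "(\<Sum>e\<in>Ev N. e j * e i) = 0"
    by (rule flip_zero[OF assms(1), of "\<lambda>e. e j"]) (use False in auto)
  then show ?thesis using False by (simp add: mult.commute)
qed

lemma bessel:
  fixes f :: "(nat \<Rightarrow> real) \<Rightarrow> real"
  shows "(\<Sum>i<N. (\<Sum>e\<in>Ev N. f e * e i)^2) \<le> real (card (Ev N)) * (\<Sum>e\<in>Ev N. (f e)^2)"
proof -
  define K where "K = real (card (Ev N))"
  have K: "K > 0" using Ev_card unfolding K_def by simp
  define c where "c = (\<lambda>i. (\<Sum>e\<in>Ev N. f e * e i) / K)"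
  have 0: "0 \<le> (\<Sum>e\<in>Ev N. (f e - (\<Sum>i<N. c i * e i))^2)"
    by (intro sum_nonneg) simp
  have a: "(\<Sum>e\<in>Ev N. f e * (\<Sum>i<N. c i * e i)) = K * (\<Sum>i<N. (c i)^2)"
  proof -
    have "(\<Sum>e\<in>Ev N. f e * (\<Sum>i<N. c i * e i)) = (\<Sum>i<N. c i * (\<Sum>e\<in>Ev N. f e * e i))"
      by (simp add: sum_distrib_left sum.swap[of _ "Ev N"] algebra_simps)
    also have "\<dots> = (\<Sum>i<N. c i * (K * c i))"
      using K by (simp add: c_def)
    finally show ?thesis by (simp add: sum_distrib_left power2_eq_square algebra_simps)
  qed
  have b: "(\<Sum>e\<in>Ev N. (\<Sum>i<N. c i * e i)^2) = K * (\<Sum>i<N. (c i)^2)"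
  proof -
    have "(\<Sum>e\<in>Ev N. (\<Sum>i<N. c i * e i)^2) = (\<Sum>e\<in>Ev N. \<Sum>i<N. \<Sum>j<N. (c i * c j) * (e i * e j))"
      by (simp add: power2_eq_square sum_product algebra_simps)
    also have "\<dots> = (\<Sum>i<N. \<Sum>j<N. (c i * c j) * (\<Sum>e\<in>Ev N. e i * e j))"
      by (simp add: sum_distrib_left sum.swap[of _ "Ev N"])
    also have "\<dots> = (\<Sum>i<N. \<Sum>j<N. (c i * c j) * (if i = j then K else 0))"
      by (intro sum.cong refl) (simp add: orth K_def)
    also have "\<dots> = K * (\<Sum>i<N. (c i)^2)"
      by (simp add: if_distrib sum.delta power2_eq_square sum_distrib_left algebra_simps cong: if_cong)
    finally show ?thesis .
  qed
  have "(\<Sum>e\<in>Ev N. (f e - (\<Sum>i<N. c i * e i))^2) =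
     (\<Sum>e\<in>Ev N. (f e)^2) - 2 * (\<Sum>e\<in>Ev N. f e * (\<Sum>i<N. c i * e i)) + (\<Sum>e\<in>Ev N. (\<Sum>i<N. c i * e i)^2)"
    by (simp add: power2_diff sum.distrib sum_subtractf sum_distrib_left mult.assoc)
  with 0 a b have H: "K * (\<Sum>i<N. (c i)^2) \<le> (\<Sum>e\<in>Ev N. (f e)^2)" by linarith
  have E: "(\<Sum>i<N. (\<Sum>e\<in>Ev N. f e * e i)^2) = K * (K * (\<Sum>i<N. (c i)^2))"
  proof -
    have "\<And>i. (\<Sum>e\<in>Ev N. f e * e i) = K * c i" using K by (simp add: c_def)
    then show ?thesis by (simp add: power_mult_distrib sum_distrib_left power2_eq_square mult_ac)
  qed
  have "K * (K * (\<Sum>i<N. (c i)^2)) \<le> K * (\<Sum>e\<in>Ev N. (f e)^2)"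
    using K H by (intro mult_left_mono) auto
  then have "(\<Sum>i<N. (\<Sum>e\<in>Ev N. f e * e i)^2) \<le> K * (\<Sum>e\<in>Ev N. (f e)^2)"
    unfolding E .
  then show ?thesis by (simp only: K_def)
qed

lemma cs_i:
  fixes p h :: "nat set \<Rightarrow> real"
  assumes fin: "finite P" and nn: "\<And>s. 0 \<le> p s" and s1: "(\<Sum>s\<in>P. p s) = 1"
    and h0: "\<And>s. s \<in> P \<Longrightarrow> i \<notin> s \<Longrightarrow> h s = 0"
    and hr: "(\<Sum>s\<in>P. p s * h s) = r"
    and pp: "0 < (\<Sum>s\<in>{s\<in>P. i \<in> s}. p s)"
  shows "r^2 * (1 - (\<Sum>s\<in>{s\<in>P. i \<in> s}. p s)) / (\<Sum>s\<in>{s\<in>P. i \<in> s}. p s) \<le> (\<Sum>s\<in>P. p s * (h s - r)^2)"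
proof -
  define Q where "Q = {s\<in>P. i \<in> s}"
  define \<pi> where "\<pi> = (\<Sum>s\<in>Q. p s)"
  have pi: "\<pi> > 0" using pp by (simp add: \<pi>_def Q_def)
  have QP: "Q \<subseteq> P" and fQ: "finite Q" using fin by (auto simp: Q_def)
  have hQ: "(\<Sum>s\<in>Q. p s * h s) = r"
    using hr h0 by (subst sum.mono_neutral_left[OF fin QP]) (auto simp: Q_def)
  have h2Q: "(\<Sum>s\<in>Q. p s * (h s)^2) = (\<Sum>s\<in>P. p s * (h s)^2)"
    using h0 by (subst sum.mono_neutral_left[OF fin QP]) (auto simp: Q_def)
  define t where "t = r / \<pi>"
  have "0 \<le> (\<Sum>s\<in>Q. p s * (h s - t)^2)" by (intro sum_nonneg) (simp add: nn)
  also have "\<dots> = (\<Sum>s\<in>Q. p s * (h s)^2) - 2 * t * (\<Sum>s\<in>Q. p s * h s) + t^2 * \<pi>"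
    by (simp add: \<pi>_def power2_diff algebra_simps sum.distrib sum_subtractf sum_distrib_left sum_distrib_right[symmetric])
  finally have A: "r^2 / \<pi> \<le> (\<Sum>s\<in>P. p s * (h s)^2)"
    using pi unfolding hQ h2Q t_def by (simp add: power2_eq_square field_simps)
  have "(\<Sum>s\<in>P. p s * (h s - r)^2) = (\<Sum>s\<in>P. p s * (h s)^2) - 2 * r * (\<Sum>s\<in>P. p s * h s) + r^2 * (\<Sum>s\<in>P. p s)"
    by (simp add: power2_diff algebra_simps sum.distrib sum_subtractf sum_distrib_left sum_distrib_right[symmetric])
  also have "\<dots> = (\<Sum>s\<in>P. p s * (h s)^2) - r^2" using hr s1 by (simp add: power2_eq_square)
  finally have B: "(\<Sum>s\<in>P. p s * (h s - r)^2) = (\<Sum>s\<in>P. p s * (h s)^2) - r^2" .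
  have "r^2 * (1 - \<pi>) / \<pi> = r^2 / \<pi> - r^2" using pi by (simp add: field_simps)
  then show ?thesis using A B unfolding \<pi>_def Q_def by linarith
qed

lemma exists_ge:
  fixes f :: "'a \<Rightarrow> real"
  assumes "finite E" "E \<noteq> {}" "real (card E) * B \<le> (\<Sum>e\<in>E. f e)"
  shows "\<exists>e\<in>E. B \<le> f e"
proof (rule ccontr)
  assume "\<not> ?thesis"
  then have "\<And>e. e \<in> E \<Longrightarrow> f e < B" by auto
  then have "(\<Sum>e\<in>E. f e) < (\<Sum>e\<in>E. B)" using assms by (intro sum_strict_mono) auto
  then show False using assms by simp
qed

lemma lower:
  fixes N :: nat and a b r m :: "nat \<Rightarrow> real" and p \<delta>
  assumes r_def: "r = (\<lambda>i. (b i - a i) / 2)" and m_def: "m = (\<lambda>i. (a i + b i) / 2)"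
    and ab: "\<forall>i<N. a i \<le> b i"
    and des: "is_design N p" and pos: "\<forall>i<N. 0 < incl_prob N p i"
    and unb: "unbiased N a b p \<delta>"
  shows "ereal (\<Sum>i<N. (r i)^2 * (1 - incl_prob N p i) / incl_prob N p i) \<le> max_risk N a b p \<delta>"
proof -
  define P where "P = Pow {..<N}"
  define K where "K = real (card (Ev N))"
  have K: "K > 0" using Ev_card unfolding K_def by simp
  define Y where "Y = (\<lambda>e::nat\<Rightarrow>real. restrict (\<lambda>j. m j + r j * e j) {..<N})"
  have YT: "Y e \<in> Theta N a b" if "e \<in> Ev N" for e
  proof -
    have "m j + r j * e j \<in> {a j..b j}" if "j < N" for j
    proof -
      have "e j = -1 \<or> e j = 1" using \<open>e \<in> Ev N\<close> that by (auto simp: PiE_iff)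
      moreover have "a j \<le> b j" using ab that by auto
      ultimately show ?thesis by (auto simp: r_def m_def field_simps)
    qed
    then show ?thesis by (auto simp: Theta_def Y_def)
  qed
  define D where "D = (\<lambda>s e. \<delta> s (restrict (Y e) s))"
  define g where "g = (\<lambda>s i. \<Sum>e\<in>Ev N. D s e * e i)"
  have sum_e: "(\<Sum>e\<in>Ev N. e i) = 0" if "i < N" for i
    using flip_zero[OF that, of "\<lambda>_. 1"] by simp
  have totY: "(\<Sum>e\<in>Ev N. total N (Y e) * e i) = K * r i" if "i < N" for i
  proof -
    have "(\<Sum>e\<in>Ev N. total N (Y e) * e i) = (\<Sum>e\<in>Ev N. (\<Sum>j<N. m j) * e i + (\<Sum>j<N. r j * (e j * e i)))"
      by (intro sum.cong refl) (simp add: total_def Y_def sum.distrib distrib_right sum_distrib_right mult.assoc)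
    also have "\<dots> = (\<Sum>j<N. m j) * (\<Sum>e\<in>Ev N. e i) + (\<Sum>j<N. r j * (\<Sum>e\<in>Ev N. e j * e i))"
      by (simp add: sum.distrib sum_distrib_left sum.swap[of _ "Ev N"])
    also have "\<dots> = (\<Sum>j<N. r j * (if j = i then K else 0))"
      using that by (simp add: sum_e orth K_def cong: if_cong)
    also have "\<dots> = K * r i" using that by (simp add: if_distrib sum.delta cong: if_cong)
    finally show ?thesis .
  qed
  have g0: "g s i = 0" if "i < N" "i \<notin> s" for s i
    unfolding g_def
  proof (rule flip_zero[OF that(1)])
    fix e :: "nat \<Rightarrow> real"
    have "restrict (Y (e(i := - e i))) s = restrict (Y e) s"
      using that(2) by (auto simp: Y_def restrict_def fun_eq_iff)
    then show "D s (e(i := - e i)) = D s e" by (simp add: D_def)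
  qed
  have gsum: "(\<Sum>s\<in>P. p s * g s i) = K * r i" if "i < N" for i
  proof -
    have "(\<Sum>s\<in>P. p s * g s i) = (\<Sum>e\<in>Ev N. (\<Sum>s\<in>P. p s * D s e) * e i)"
      unfolding g_def by (simp add: sum_distrib_left sum_distrib_right sum.swap[of _ P] mult.assoc)
    also have "\<dots> = (\<Sum>e\<in>Ev N. total N (Y e) * e i)"
      using unb YT by (intro sum.cong refl) (simp add: unbiased_def D_def P_def)
    finally show ?thesis using totY that by simp
  qed
  define h where "h = (\<lambda>s i. g s i / K)"
  have fe: "(\<Sum>e\<in>Ev N. (D s e - total N (Y e)) * e i) = g s i - K * r i" if "i < N" for s i
    using totY[OF that] by (simp add: g_def left_diff_distrib sum_subtractf)
  have bes: "K * (\<Sum>i<N. (h s i - r i)^2) \<le> (\<Sum>e\<in>Ev N. (D s e - total N (Y e))^2)" for s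
  proof -
    have "(\<Sum>i<N. (g s i - K * r i)^2) \<le> K * (\<Sum>e\<in>Ev N. (D s e - total N (Y e))^2)"
      using bessel[where N=N and f="\<lambda>e. D s e - total N (Y e)"] fe by (simp add: K_def)
    moreover have "(\<Sum>i<N. (g s i - K * r i)^2) = K * (K * (\<Sum>i<N. (h s i - r i)^2))"
    proof -
      have "\<And>i. (g s i - K * r i)^2 = K * (K * (h s i - r i)^2)"
        using K by (simp add: h_def power2_eq_square field_simps)
      then show ?thesis by (simp add: sum_distrib_left)
    qed
    ultimately show ?thesis using K by (simp add: mult_le_cancel_left_pos)
  qed
  have pnn: "\<And>s. 0 \<le> p s" and p1: "(\<Sum>s\<in>P. p s) = 1"
    using des by (auto simp: is_design_def P_def)
  have per_i: "(r i)^2 * (1 - incl_prob N p i) / incl_prob N p i \<le> (\<Sum>s\<in>P. p s * (h s i - r i)^2)"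
    if "i < N" for i
    unfolding incl_prob_def P_def[symmetric]
  proof (rule cs_i)
    show "finite P" by (simp add: P_def)
    show "\<And>s. 0 \<le> p s" by (rule pnn)
    show "sum p P = 1" by (rule p1)
    show "\<And>s. s \<in> P \<Longrightarrow> i \<notin> s \<Longrightarrow> h s i = 0" using g0 that by (simp add: h_def)
    show "(\<Sum>s\<in>P. p s * h s i) = r i"
    proof -
      have "(\<Sum>s\<in>P. p s * h s i) = (\<Sum>s\<in>P. p s * g s i) / K"
        by (simp add: h_def sum_divide_distrib)
      then show ?thesis using gsum[OF that] K by simp
    qed
    show "0 < sum p {s \<in> P. i \<in> s}" using pos that by (simp add: incl_prob_def P_def)
  qed
  define B where "B = (\<Sum>i<N. (r i)^2 * (1 - incl_prob N p i) / incl_prob N p i)"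
  have "K * B \<le> K * (\<Sum>i<N. \<Sum>s\<in>P. p s * (h s i - r i)^2)"
    unfolding B_def using K per_i by (intro mult_left_mono sum_mono) auto
  also have "\<dots> = (\<Sum>s\<in>P. p s * (K * (\<Sum>i<N. (h s i - r i)^2)))"
    by (simp add: sum_distrib_left sum.swap[of _ P] mult_ac)
  also have "\<dots> \<le> (\<Sum>s\<in>P. p s * (\<Sum>e\<in>Ev N. (D s e - total N (Y e))^2))"
    by (intro sum_mono mult_left_mono bes pnn)
  also have "\<dots> = (\<Sum>e\<in>Ev N. risk N p \<delta> (Y e))"
    unfolding risk_def P_def D_def by (simp add: sum_distrib_left) (rule sum.swap)
  finally have KB: "real (card (Ev N)) * B \<le> (\<Sum>e\<in>Ev N. risk N p \<delta> (Y e))" by (simp only: K_def)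
  have ne: "Ev N \<noteq> {}" using Ev_card[of N] by (metis card.empty less_irrefl)
  obtain e where e: "e \<in> Ev N" "B \<le> risk N p \<delta> (Y e)"
    using exists_ge[OF Ev_finite ne KB] by blast
  have "ereal B \<le> ereal (risk N p \<delta> (Y e))" using e by simp
  also have "\<dots> \<le> max_risk N a b p \<delta>"
    unfolding max_risk_def using YT[OF e(1)] by (rule SUP_upper2) simp
  finally show ?thesis by (simp add: B_def)
qed

lemma pt:
  fixes r c p :: real
  assumes r: "r > 0" and c: "c > 0" and p: "0 < p" "p \<le> 1"
  shows "r^2 * (1 - min 1 (c*r)) / min 1 (c*r) - (p - min 1 (c*r)) / c^2 \<le> r^2 * (1 - p) / p"
proof (cases "c * r \<le> 1")
  case True
  then have q: "min 1 (c*r) = c * r" by simp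
  have "0 \<le> (r*c - p)^2" by simp
  then have "2*r*c*p - p^2 \<le> r^2*c^2" by (simp add: power2_diff algebra_simps)
  then have "(2*r*c*p - p^2) / (p * c^2) \<le> r^2*c^2 / (p*c^2)"
    using p c by (intro divide_right_mono) auto
  moreover have "(2*r*c*p - p^2) / (p * c^2) = 2*r/c - p/c^2" using p c by (simp add: field_simps power2_eq_square)
  moreover have "r^2*c^2 / (p*c^2) = r^2/p" using p c by (simp add: field_simps power2_eq_square)
  ultimately have "2*r/c - p/c^2 \<le> r^2/p" by simp
  moreover have "r^2 * (1 - c*r) / (c*r) - (p - c*r) / c^2 = 2*r/c - p/c^2 - r^2"
    using r c by (simp add: field_simps power2_eq_square)
  moreover have "r^2 * (1 - p) / p = r^2/p - r^2" using p by (simp add: field_simps)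
  ultimately show ?thesis unfolding q by linarith
next
  case False
  then have q: "min 1 (c*r) = 1" by simp
  have "1 \<le> c*r" using False by simp
  then have "1*1 \<le> (c*r)*(c*r)" by (intro mult_mono) auto
  then have "1 \<le> (c*r)^2" by (simp add: power2_eq_square)
  then have "1 / c^2 \<le> r^2" using c by (simp add: field_simps power_mult_distrib)
  then have "(1 - p) * (1 / c^2) \<le> (1 - p) * r^2" using p by (intro mult_left_mono) auto
  also have "(1 - p) * r^2 \<le> r^2 * (1 - p) / p"
  proof -
    have "0 \<le> (1 - p) * r^2" using p by simp
    then have "(1 - p) * r^2 * p \<le> (1 - p) * r^2" using p by (simp add: mult_left_le)
    then show ?thesis using p by (simp add: field_simps)
  qed
  finally have "(1 - p) / c^2 \<le> r^2 * (1 - p) / p" by simp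
  moreover have "- ((p - 1) / c^2) = (1 - p) / c^2" by (metis minus_diff_eq minus_divide_left)
  ultimately show ?thesis unfolding q by simp
qed

lemma opt:
  fixes r \<pi> :: "nat \<Rightarrow> real" and c n :: real
  assumes r: "\<forall>i<N. r i > 0" and c: "c > 0" and cn: "(\<Sum>i<N. min 1 (c * r i)) = n"
    and p: "\<forall>i<N. 0 < \<pi> i \<and> \<pi> i \<le> 1" and ps: "(\<Sum>i<N. \<pi> i) \<le> n"
  shows "(\<Sum>i<N. (r i)^2 * (1 - min 1 (c * r i)) / min 1 (c * r i)) \<le> (\<Sum>i<N. (r i)^2 * (1 - \<pi> i) / \<pi> i)"
proof -
  have "(\<Sum>i<N. (r i)^2 * (1 - min 1 (c * r i)) / min 1 (c * r i) - (\<pi> i - min 1 (c * r i)) / c^2)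
     \<le> (\<Sum>i<N. (r i)^2 * (1 - \<pi> i) / \<pi> i)"
    using r c p by (intro sum_mono pt) auto
  moreover have "(\<Sum>i<N. (r i)^2 * (1 - min 1 (c * r i)) / min 1 (c * r i) - (\<pi> i - min 1 (c * r i)) / c^2)
     = (\<Sum>i<N. (r i)^2 * (1 - min 1 (c * r i)) / min 1 (c * r i)) - ((\<Sum>i<N. \<pi> i) - n) / c^2"
    using cn by (simp add: sum_subtractf sum_divide_distrib[symmetric])
  moreover have "((\<Sum>i<N. \<pi> i) - n) / c^2 \<le> 0" using ps c by (simp add: divide_nonpos_pos)
  ultimately show ?thesis by linarith
qed

lemma Vn_eq:
  fixes r :: "nat \<Rightarrow> real" and c n :: real
  assumes r: "\<forall>i<N. r i > 0" and c: "c > 0" and cn: "(\<Sum>i<N. min 1 (c * r i)) = n"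
  shows "Vn N r n = (\<Sum>i<N. (r i)^2 * (1 - min 1 (c * r i)) / min 1 (c * r i))"
  unfolding Vn_def
proof (rule cInf_eq_minimum)
  show "(\<Sum>i<N. (r i)^2 * (1 - min 1 (c * r i)) / min 1 (c * r i)) \<in>
    {(\<Sum>i<N. (r i)^2 * (1 - \<pi> i) / \<pi> i) | \<pi>. (\<forall>i<N. 0 < \<pi> i \<and> \<pi> i \<le> 1) \<and> (\<Sum>i<N. \<pi> i) \<le> n}"
    using r c cn by (auto intro!: exI[of _ "\<lambda>i. min 1 (c * r i)"])
next
  fix x assume "x \<in> {(\<Sum>i<N. (r i)^2 * (1 - \<pi> i) / \<pi> i) | \<pi>. (\<forall>i<N. 0 < \<pi> i \<and> \<pi> i \<le> 1) \<and> (\<Sum>i<N. \<pi> i) \<le> n}"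
  then obtain \<pi> where "x = (\<Sum>i<N. (r i)^2 * (1 - \<pi> i) / \<pi> i)" "\<forall>i<N. 0 < \<pi> i \<and> \<pi> i \<le> 1" "(\<Sum>i<N. \<pi> i) \<le> n"
    by blast
  then show "(\<Sum>i<N. (r i)^2 * (1 - min 1 (c * r i)) / min 1 (c * r i)) \<le> x"
    using opt[OF r c cn] by simp
qed

lemma exists_c:
  fixes r :: "nat \<Rightarrow> real" and n :: real
  assumes r: "\<forall>i<N. r i > 0" and n: "0 < n" "n < real N"
  shows "\<exists>c>0. (\<Sum>i<N. min 1 (c * r i)) = n"
proof -
  define F where "F = (\<lambda>c. \<Sum>i<N. min 1 (c * r i))"
  define C where "C = (\<Sum>i<N. 1 / r i)"
  have C1: "1 \<le> C * r i" if "i < N" for i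
  proof -
    have "1 / r i \<le> C" unfolding C_def using r that
      by (intro member_le_sum) auto
    then show ?thesis using r that by (simp add: field_simps)
  qed
  have "F 0 = 0" by (simp add: F_def)
  have FC: "F C = real N" unfolding F_def using C1 by (simp add: min_def)
  have C0: "0 \<le> C" unfolding C_def using r by (intro sum_nonneg) auto
  have cont: "\<forall>x. 0 \<le> x \<and> x \<le> C \<longrightarrow> isCont F x" unfolding F_def by (auto intro!: continuous_intros)
  obtain x where x: "0 \<le> x" "x \<le> C" "F x = n"
    using IVT[of F 0 n C] \<open>F 0 = 0\<close> FC C0 cont n by auto
  have "x \<noteq> 0" using x \<open>F 0 = 0\<close> n by auto
  then show ?thesis using x by (intro exI[of _ x]) (auto simp: F_def)
qed

context pois begin
lemma maxrisk_pois:
  fixes a b r m :: "nat \<Rightarrow> real"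
  assumes r_def: "r = (\<lambda>i. (b i - a i) / 2)" and m_def: "m = (\<lambda>i. (a i + b i) / 2)"
    and ab: "\<forall>i<N. a i \<le> b i"
  shows "max_risk N a b pd (\<lambda>s z. (\<Sum>i<N. m i) + (\<Sum>i\<in>s. (z i - m i) / \<pi> i))
     = ereal (\<Sum>i<N. (r i)^2 * (1 - \<pi> i) / \<pi> i)"
  unfolding max_risk_def risk_pois
proof (rule antisym)
  show "(SUP y\<in>Theta N a b. ereal (\<Sum>i<N. (y i - m i)\<^sup>2 * (1 - \<pi> i) / \<pi> i)) \<le> ereal (\<Sum>i<N. (r i)^2 * (1 - \<pi> i) / \<pi> i)"
  proof (rule SUP_least)
    fix y assume y: "y \<in> Theta N a b"
    have "(y i - m i)\<^sup>2 * (1 - \<pi> i) / \<pi> i \<le> (r i)^2 * (1 - \<pi> i) / \<pi> i" if i: "i < N" for i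
    proof -
      have "a i \<le> y i" "y i \<le> b i" using y i by (auto simp: Theta_def PiE_iff)
      then have "0 \<le> (r i - (y i - m i)) * (r i + (y i - m i))"
        by (intro mult_nonneg_nonneg) (auto simp: r_def m_def field_simps)
      then have "(y i - m i)\<^sup>2 \<le> (r i)^2" by (simp add: power2_eq_square algebra_simps)
      moreover have "0 \<le> (1 - \<pi> i) / \<pi> i" using pos[OF i] le1[OF i] by simp
      ultimately have "(y i - m i)\<^sup>2 * ((1 - \<pi> i) / \<pi> i) \<le> (r i)^2 * ((1 - \<pi> i) / \<pi> i)"
        by (rule mult_right_mono)
      then show ?thesis by simp
    qed
    then have "(\<Sum>i<N. (y i - m i)\<^sup>2 * (1 - \<pi> i) / \<pi> i) \<le> (\<Sum>i<N. (r i)^2 * (1 - \<pi> i) / \<pi> i)"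
      by (intro sum_mono) auto
    then show "ereal (\<Sum>i<N. (y i - m i)\<^sup>2 * (1 - \<pi> i) / \<pi> i) \<le> ereal (\<Sum>i<N. (r i)^2 * (1 - \<pi> i) / \<pi> i)"
      by simp
  qed
next
  have y0: "restrict b {..<N} \<in> Theta N a b" using ab by (auto simp: Theta_def)
  have "(\<Sum>i<N. (restrict b {..<N} i - m i)\<^sup>2 * (1 - \<pi> i) / \<pi> i) = (\<Sum>i<N. (r i)^2 * (1 - \<pi> i) / \<pi> i)"
    by (intro sum.cong refl) (simp add: r_def m_def field_simps)
  then show "ereal (\<Sum>i<N. (r i)^2 * (1 - \<pi> i) / \<pi> i) \<le> (SUP y\<in>Theta N a b. ereal (\<Sum>i<N. (y i - m i)\<^sup>2 * (1 - \<pi> i) / \<pi> i))"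
    using y0 by (intro SUP_upper2[of "restrict b {..<N}"]) auto
qed
end

lemma incl_le1: assumes "is_design N p" shows "incl_prob N p i \<le> 1"
proof -
  have "incl_prob N p i \<le> (\<Sum>s\<in>Pow {..<N}. p s)"
    unfolding incl_prob_def using assms by (intro sum_mono2) (auto simp: is_design_def)
  then show ?thesis using assms by (simp add: is_design_def)
qed

theorem theorem3:
  fixes N :: nat and a b :: "nat \<Rightarrow> real" and n :: real
  defines "r \<equiv> (\<lambda>i. (b i - a i) / 2)"
      and "m \<equiv> (\<lambda>i. (a i + b i) / 2)"
  assumes "N \<ge> 1"
      and "\<forall>i<N. a i \<le> b i"
      and "\<forall>i<N. r i > 0"
      and "0 < n" and "n < real N"
  shows "(INF pd\<in>{(p, \<delta>). admissible N a b n p \<delta>}. max_risk N a b (fst pd) (snd pd))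
           = ereal (Vn N r n)
         \<and> (\<exists>c>0. (\<Sum>i<N. min 1 (c * r i)) = n)
         \<and> (\<forall>c>0. (\<Sum>i<N. min 1 (c * r i)) = n \<longrightarrow>
           (let \<pi> = (\<lambda>i. min 1 (c * r i));
                p = poisson_design N \<pi>;
                \<delta> = (\<lambda>s z. (\<Sum>i<N. m i) + (\<Sum>i\<in>s. (z i - m i) / \<pi> i))
            in admissible N a b n p \<delta>
               \<and> (\<forall>i<N. incl_prob N p i = \<pi> i)
               \<and> (\<Sum>i<N. (r i)^2 * (1 - \<pi> i) / \<pi> i) = Vn N r n
               \<and> max_risk N a b p \<delta> = ereal (Vn N r n)))"
proof -
  have rd: "r = (\<lambda>i. (b i - a i) / 2)" and md: "m = (\<lambda>i. (a i + b i) / 2)"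
    by (simp_all add: r_def m_def)
  note ab = assms(4) and rpos = assms(5)
  have exc: "\<exists>c>0. (\<Sum>i<N. min 1 (c * r i)) = n"
    by (rule exists_c[OF rpos assms(6,7)])
  have P: "let \<pi> = (\<lambda>i. min 1 (c * r i));
                p = poisson_design N \<pi>;
                \<delta> = (\<lambda>s z. (\<Sum>i<N. m i) + (\<Sum>i\<in>s. (z i - m i) / \<pi> i))
            in admissible N a b n p \<delta>
               \<and> (\<forall>i<N. incl_prob N p i = \<pi> i)
               \<and> (\<Sum>i<N. (r i)^2 * (1 - \<pi> i) / \<pi> i) = Vn N r n
               \<and> max_risk N a b p \<delta> = ereal (Vn N r n)"
    if c: "c > 0" and cn: "(\<Sum>i<N. min 1 (c * r i)) = n" for c
  proof -
    define \<pi> where "\<pi> = (\<lambda>i. min 1 (c * r i))"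
    interpret pois N \<pi>
      by unfold_locales (use c rpos in \<open>auto simp: \<pi>_def\<close>)
    have V: "(\<Sum>i<N. (r i)^2 * (1 - \<pi> i) / \<pi> i) = Vn N r n"
      unfolding \<pi>_def using Vn_eq[OF rpos c cn] by simp
    have adm: "admissible N a b n pd (\<lambda>s z. (\<Sum>i<N. m i) + (\<Sum>i\<in>s. (z i - m i) / \<pi> i))"
      unfolding admissible_def
      using is_design incl pos exp_size_pois cn estimator_pois unbiased_pois
      by (auto simp: \<pi>_def)
    show ?thesis
      unfolding Let_def \<pi>_def[symmetric]
      using adm incl V maxrisk_pois[OF rd md ab] by simp
  qed
  have inf: "(INF pd\<in>{(p, \<delta>). admissible N a b n p \<delta>}. max_risk N a b (fst pd) (snd pd)) = ereal (Vn N r n)"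
  proof (rule antisym)
    obtain c where c: "c > 0" "(\<Sum>i<N. min 1 (c * r i)) = n" using exc by blast
    define \<pi> where "\<pi> = (\<lambda>i. min 1 (c * r i))"
    have "admissible N a b n (poisson_design N \<pi>) (\<lambda>s z. (\<Sum>i<N. m i) + (\<Sum>i\<in>s. (z i - m i) / \<pi> i))"
      and "max_risk N a b (poisson_design N \<pi>) (\<lambda>s z. (\<Sum>i<N. m i) + (\<Sum>i\<in>s. (z i - m i) / \<pi> i)) = ereal (Vn N r n)"
      using P[OF c] unfolding Let_def \<pi>_def by auto
    then show "(INF pd\<in>{(p, \<delta>). admissible N a b n p \<delta>}. max_risk N a b (fst pd) (snd pd)) \<le> ereal (Vn N r n)"
      by (intro INF_lower2[of "(poisson_design N \<pi>, \<lambda>s z. (\<Sum>i<N. m i) + (\<Sum>i\<in>s. (z i - m i) / \<pi> i))"]) auto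
  next
    show "ereal (Vn N r n) \<le> (INF pd\<in>{(p, \<delta>). admissible N a b n p \<delta>}. max_risk N a b (fst pd) (snd pd))"
    proof (rule INF_greatest)
      fix pd assume "pd \<in> {(p, \<delta>). admissible N a b n p \<delta>}"
      then obtain p \<delta> where pd: "pd = (p, \<delta>)" and adm: "admissible N a b n p \<delta>" by auto
      have des: "is_design N p" and ipos: "\<forall>i<N. 0 < incl_prob N p i"
        and es: "exp_size N p \<le> n" and unb: "unbiased N a b p \<delta>"
        using adm by (auto simp: admissible_def)
      obtain c where c: "c > 0" "(\<Sum>i<N. min 1 (c * r i)) = n" using exc by blast
      have "Vn N r n \<le> (\<Sum>i<N. (r i)^2 * (1 - incl_prob N p i) / incl_prob N p i)"
        unfolding Vn_eq[OF rpos c]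
        by (rule opt[OF rpos c]) (use ipos incl_le1[OF des] es exp_size_eq in auto)
      then have "ereal (Vn N r n) \<le> ereal (\<Sum>i<N. (r i)^2 * (1 - incl_prob N p i) / incl_prob N p i)"
        by simp
      also have "\<dots> \<le> max_risk N a b p \<delta>"
        by (rule lower[OF rd md ab des ipos unb])
      finally show "ereal (Vn N r n) \<le> max_risk N a b (fst pd) (snd pd)" using pd by simp
    qed
  qed
  show ?thesis using inf exc P by blast
qed

end
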